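(* Let $\Sigma\subseteq\mathcal L_\Diamond$ be finite and closed under subformulas and let $\mathcal I$ be a finite weak $\Sigma$-quasimodel such that for every deterministic weak $\mathcal L_\Diamond$-quasimodel $\mathcal A$ the relation $\rightharpoonup\ \subseteq|\mathcal I|\times|\mathcal A|$ is a surjective dynamic simulation. Let $P=\{w\in|\mathcal I|:\not\vdash\mathrm{Sim}(w)\}$, and for $w\in P$ let $R(w)$ be the set of $v\in P$ for which there is a finite sequence $u_0,\dots,u_n$ of elements of $P$ with $u_0=w$, $u_n=v$ and $u_i\,S_{\mathcal I}\,u_{i+1}$ for all $i<n$. Then for every $w\in P$, $$\vdash\ \bigcirc\bigwedge_{v\in R(w)}\mathrm{Sim}(v)\ \to\ \bigwedge_{v\in R(w)}\mathrm{Sim}(v).$$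
   Context: $\mathcal L_\Diamond$ is the propositional language with $\bot,\wedge,\vee,\to$ and unary modalities $\bigcirc$, $\Diamond$. ${\sf ITL}^0_\Diamond$ is axiomatized by all intuitionistic propositional tautologies, $\neg\bigcirc\bot$, $\bigcirc\varphi\wedge\bigcirc\psi\to\bigcirc(\varphi\wedge\psi)$, $\bigcirc(\varphi\vee\psi)\to\bigcirc\varphi\vee\bigcirc\psi$, $\bigcirc(\varphi\to\psi)\to(\bigcirc\varphi\to\bigcirc\psi)$, $\varphi\vee\bigcirc\Diamond\varphi\to\Diamond\varphi$, closed under modus ponens and the rules $\varphi/\bigcirc\varphi$, $(\varphi\to\psi)/(\Diamond\varphi\to\Diamond\psi)$, $(\bigcirc\varphi\to\varphi)/(\Diamond\varphi\to\varphi)$; $\vdash\varphi$ means $\varphi\in{\sf ITL}^0_\Diamond$. Types: a $\Sigma$-type is a pair $\Phi=(\Phi^-;\Phi^+)$ of subsets of $\Sigma$ with $\Phi^-\cap\Phi^+=\varnothing$, $\Phi^-\cup\Phi^+=\Sigma$, $\bot\notin\Phi^+$, $\wedge,\vee$ in $\Phi^+$ behaving classically, ($\varphi\to\psi\in\Phi^+\Rightarrow\varphi\in\Phi^-$ or $\psi\in\Phi^+$), ($\Diamond\varphi\in\Phi^-\Rightarrow\varphi\in\Phi^-$). $\Phi\preccurlyeq_T\Psi$ iff $\Phi^+\subseteq\Psi^+$; $\Phi\subseteq_T\Psi$ iff $\Phi^-\subseteq\Psi^-$, $\Phi^+\subseteq\Psi^+$. $\Phi\,S_T\,\Psi$ iff: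 $\bigcirc\varphi\in\Phi^+\Rightarrow\varphi\in\Psi^+$; $\bigcirc\varphi\in\Phi^-\Rightarrow\varphi\in\Psi^-$; ($\Diamond\varphi\in\Phi^+$, $\varphi\in\Phi^-$)$\Rightarrow\Diamond\varphi\in\Psi^+$; $\Diamond\varphi\in\Phi^-\Rightarrow\Diamond\varphi\in\Psi^-$. A $\Sigma$-labelled frame is $(W,\preccurlyeq,\ell)$, $\preccurlyeq$ a partial order, $\ell$ mapping to $\Sigma$-types, monotone w.r.t. $\preccurlyeq_T$, and if $\varphi\to\psi\in\ell^-(w)$ then some $v\succcurlyeq w$ has $\varphi\in\ell^+(v)$, $\psi\in\ell^-(v)$. A weak $\Sigma$-quasimodel adds $S\subseteq W\times W$ forward-confluent and sensible ($w\,S\,v\Rightarrow\ell(w)\,S_T\,\ell(v)$); deterministic if $S$ is a function. A simulation from a $\Sigma$-labelled $\mathcal X$ to a $\Delta$-labelled $\mathcal Y$ ($\Sigma\subseteq\Delta$) is a forward-confluent $E\subseteq|\mathcal X|\times|\mathcal Y|$ (if $x\,E\,y$, $x\preccurlyeq x'$ then some $y'\succcurlyeq y$ has $x'\,E\,y'$) with $x\,E\,y\Rightarrow\ell(x)\subseteq_T\ell(y)$; $x\rightharpoonup y$ iff some simulation relates them; $E$ is dynamic if $x\,E\,y$ and $y\,S\,y'$ imply some $x'$ with $x\,S\,x'$, $x'\,E\,y'$; surjective if every point of $\mathcal A$ is in its range. $\mathrm{Sim}(w)=\bigwedge\ell^+(w)\to\big(\bigvee\ell^-(w)\vee\bigvee_{v\succ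 w}\mathrm{Sim}(v)\big)$, defined by backwards induction on $\prec$ ($\bigwedge\varnothing=\top$, $\bigvee\varnothing=\bot$). *)

theory Defs
  imports Main
begin

datatype fm =
    Atom nat
  | Bot
  | And fm fm
  | Or fm fm
  | Imp fm fm
  | Next fm
  | Dia fm

definition Top :: fm where "Top = Imp Bot Bot"
definition Neg :: "fm \<Rightarrow> fm" where "Neg \<phi> = Imp \<phi> Bot"

fun subfms :: "fm \<Rightarrow> fm set" where
  "subfms (Atom p) = {Atom p}"
| "subfms Bot = {Bot}"
| "subfms (And a b) = insert (And a b) (subfms a \<union> subfms b)"
| "subfms (Or a b) = insert (Or a b) (subfms a \<union> subfms b)"
| "subfms (Imp a b) = insert (Imp a b) (subfms a \<union> subfms b)"
| "subfms (Next a) = insert (Next a) (subfms a)"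
| "subfms (Dia a) = insert (Dia a) (subfms a)"

definition closed_sub :: "fm set \<Rightarrow> bool" where
  "closed_sub \<Sigma> \<longleftrightarrow> (\<forall>\<phi>\<in>\<Sigma>. subfms \<phi> \<subseteq> \<Sigma>)"

fun conj_list :: "fm list \<Rightarrow> fm" where
  "conj_list [] = Top"
| "conj_list [\<phi>] = \<phi>"
| "conj_list (\<phi> # \<psi>s) = And \<phi> (conj_list \<psi>s)"

fun disj_list :: "fm list \<Rightarrow> fm" where
  "disj_list [] = Bot"
| "disj_list [\<phi>] = \<phi>"
| "disj_list (\<phi> # \<psi>s) = Or \<phi> (disj_list \<psi>s)"

definition list_of :: "fm set \<Rightarrow> fm list" where
  "list_of A = (SOME xs. set xs = A \<and> distinct xs)"

definition BigAnd :: "fm set \<Rightarrow> fm" where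
  "BigAnd A = conj_list (list_of A)"

definition BigOr :: "fm set \<Rightarrow> fm" where
  "BigOr A = disj_list (list_of A)"

inductive prov :: "fm \<Rightarrow> bool" ("\<turnstile> _" [40] 40) where
  ax_K:   "\<turnstile> Imp \<phi> (Imp \<psi> \<phi>)"
| ax_S:   "\<turnstile> Imp (Imp \<phi> (Imp \<psi> \<chi>)) (Imp (Imp \<phi> \<psi>) (Imp \<phi> \<chi>))"
| ax_C1:  "\<turnstile> Imp (And \<phi> \<psi>) \<phi>"
| ax_C2:  "\<turnstile> Imp (And \<phi> \<psi>) \<psi>"
| ax_C3:  "\<turnstile> Imp \<phi> (Imp \<psi> (And \<phi> \<psi>))"
| ax_D1:  "\<turnstile> Imp \<phi> (Or \<phi> \<psi>)"
| ax_D2:  "\<turnstile> Imp \<psi> (Or \<phi> \<psi>)"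
| ax_D3:  "\<turnstile> Imp (Imp \<phi> \<chi>) (Imp (Imp \<psi> \<chi>) (Imp (Or \<phi> \<psi>) \<chi>))"
| ax_EFQ: "\<turnstile> Imp Bot \<phi>"
| ax_NBot:  "\<turnstile> Neg (Next Bot)"
| ax_NAnd:  "\<turnstile> Imp (And (Next \<phi>) (Next \<psi>)) (Next (And \<phi> \<psi>))"
| ax_NOr:   "\<turnstile> Imp (Next (Or \<phi> \<psi>)) (Or (Next \<phi>) (Next \<psi>))"
| ax_NImp:  "\<turnstile> Imp (Next (Imp \<phi> \<psi>)) (Imp (Next \<phi>) (Next \<psi>))"
| ax_Dia:   "\<turnstile> Imp (Or \<phi> (Next (Dia \<phi>))) (Dia \<phi>)"
| mp:       "\<turnstile> Imp \<phi> \<psi> \<Longrightarrow> \<turnstile> \<phi> \<Longrightarrow> \<turnstile> \<psi>"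
| nec:      "\<turnstile> \<phi> \<Longrightarrow> \<turnstile> Next \<phi>"
| dia_mono: "\<turnstile> Imp \<phi> \<psi> \<Longrightarrow> \<turnstile> Imp (Dia \<phi>) (Dia \<psi>)"
| dia_ind:  "\<turnstile> Imp (Next \<phi>) \<phi> \<Longrightarrow> \<turnstile> Imp (Dia \<phi>) \<phi>"

type_synonym ftype = "fm set \<times> fm set"

abbreviation tneg :: "ftype \<Rightarrow> fm set" where "tneg \<Phi> \<equiv> fst \<Phi>"
abbreviation tpos :: "ftype \<Rightarrow> fm set" where "tpos \<Phi> \<equiv> snd \<Phi>"

definition is_type :: "fm set \<Rightarrow> ftype \<Rightarrow> bool" where
  "is_type \<Sigma> \<Phi> \<longleftrightarrow>
     tneg \<Phi> \<inter> tpos \<Phi> = {} \<and> tneg \<Phi> \<union> tpos \<Phi> = \<Sigma> \<and> Bot \<notin> tpos \<Phi> \<and>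
     (\<forall>\<phi> \<psi>. And \<phi> \<psi> \<in> \<Sigma> \<longrightarrow> (And \<phi> \<psi> \<in> tpos \<Phi> \<longleftrightarrow> \<phi> \<in> tpos \<Phi> \<and> \<psi> \<in> tpos \<Phi>)) \<and>
     (\<forall>\<phi> \<psi>. Or \<phi> \<psi> \<in> \<Sigma> \<longrightarrow> (Or \<phi> \<psi> \<in> tpos \<Phi> \<longleftrightarrow> \<phi> \<in> tpos \<Phi> \<or> \<psi> \<in> tpos \<Phi>)) \<and>
     (\<forall>\<phi> \<psi>. Imp \<phi> \<psi> \<in> tpos \<Phi> \<longrightarrow> \<phi> \<in> tneg \<Phi> \<or> \<psi> \<in> tpos \<Phi>) \<and>
     (\<forall>\<phi>. Dia \<phi> \<in> tneg \<Phi> \<longrightarrow> \<phi> \<in> tneg \<Phi>)"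

definition sub_T :: "ftype \<Rightarrow> ftype \<Rightarrow> bool" where
  "sub_T \<Phi> \<Psi> \<longleftrightarrow> tneg \<Phi> \<subseteq> tneg \<Psi> \<and> tpos \<Phi> \<subseteq> tpos \<Psi>"

definition S_T :: "ftype \<Rightarrow> ftype \<Rightarrow> bool" where
  "S_T \<Phi> \<Psi> \<longleftrightarrow>
     (\<forall>\<phi>. Next \<phi> \<in> tpos \<Phi> \<longrightarrow> \<phi> \<in> tpos \<Psi>) \<and>
     (\<forall>\<phi>. Next \<phi> \<in> tneg \<Phi> \<longrightarrow> \<phi> \<in> tneg \<Psi>) \<and>
     (\<forall>\<phi>. Dia \<phi> \<in> tpos \<Phi> \<and> \<phi> \<in> tneg \<Phi> \<longrightarrow> Dia \<phi> \<in> tpos \<Psi>) \<and>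
     (\<forall>\<phi>. Dia \<phi> \<in> tneg \<Phi> \<longrightarrow> Dia \<phi> \<in> tneg \<Psi>)"

definition partial_order_on' :: "'a set \<Rightarrow> ('a \<Rightarrow> 'a \<Rightarrow> bool) \<Rightarrow> bool" where
  "partial_order_on' W le \<longleftrightarrow>
     (\<forall>x\<in>W. le x x) \<and>
     (\<forall>x\<in>W. \<forall>y\<in>W. \<forall>z\<in>W. le x y \<and> le y z \<longrightarrow> le x z) \<and>
     (\<forall>x\<in>W. \<forall>y\<in>W. le x y \<and> le y x \<longrightarrow> x = y)"

definition labelled_frame ::
  "fm set \<Rightarrow> 'a set \<Rightarrow> ('a \<Rightarrow> 'a \<Rightarrow> bool) \<Rightarrow> ('a \<Rightarrow> ftype) \<Rightarrow> bool" where
  "labelled_frame \<Sigma> W le lab \<longleftrightarrow>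
     partial_order_on' W le \<and>
     (\<forall>w\<in>W. is_type \<Sigma> (lab w)) \<and>
     (\<forall>w\<in>W. \<forall>v\<in>W. le w v \<longrightarrow> tpos (lab w) \<subseteq> tpos (lab v)) \<and>
     (\<forall>w\<in>W. \<forall>\<phi> \<psi>. Imp \<phi> \<psi> \<in> tneg (lab w) \<longrightarrow>
        (\<exists>v\<in>W. le w v \<and> \<phi> \<in> tpos (lab v) \<and> \<psi> \<in> tneg (lab v)))"

definition forward_confluent ::
  "'a set \<Rightarrow> ('a \<Rightarrow> 'a \<Rightarrow> bool) \<Rightarrow> ('a \<Rightarrow> 'a \<Rightarrow> bool) \<Rightarrow> bool" where
  "forward_confluent W le S \<longleftrightarrow>
     (\<forall>w\<in>W. \<forall>w'\<in>W. \<forall>v\<in>W. le w w' \<and> S w v \<longrightarrow> (\<exists>v'\<in>W. le v v' \<and> S w' v'))"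

definition weak_quasimodel ::
  "fm set \<Rightarrow> 'a set \<Rightarrow> ('a \<Rightarrow> 'a \<Rightarrow> bool) \<Rightarrow> ('a \<Rightarrow> ftype) \<Rightarrow> ('a \<Rightarrow> 'a \<Rightarrow> bool) \<Rightarrow> bool" where
  "weak_quasimodel \<Sigma> W le lab S \<longleftrightarrow>
     labelled_frame \<Sigma> W le lab \<and>
     (\<forall>w v. S w v \<longrightarrow> w \<in> W \<and> v \<in> W) \<and>
     forward_confluent W le S \<and>
     (\<forall>w\<in>W. \<forall>v\<in>W. S w v \<longrightarrow> S_T (lab w) (lab v))"

definition deterministic :: "'a set \<Rightarrow> ('a \<Rightarrow> 'a \<Rightarrow> bool) \<Rightarrow> bool" where
  "deterministic W S \<longleftrightarrow> (\<forall>w\<in>W. \<exists>!v. S w v)"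

definition simulation ::
  "'a set \<Rightarrow> ('a \<Rightarrow> 'a \<Rightarrow> bool) \<Rightarrow> ('a \<Rightarrow> ftype) \<Rightarrow>
   'b set \<Rightarrow> ('b \<Rightarrow> 'b \<Rightarrow> bool) \<Rightarrow> ('b \<Rightarrow> ftype) \<Rightarrow> ('a \<Rightarrow> 'b \<Rightarrow> bool) \<Rightarrow> bool" where
  "simulation W le lab W' le' lab' E \<longleftrightarrow>
     (\<forall>x y. E x y \<longrightarrow> x \<in> W \<and> y \<in> W') \<and>
     (\<forall>x y x'. E x y \<and> x' \<in> W \<and> le x x' \<longrightarrow> (\<exists>y'\<in>W'. le' y y' \<and> E x' y')) \<and>
     (\<forall>x y. E x y \<longrightarrow> sub_T (lab x) (lab' y))"

definition simulates ::
  "'a set \<Rightarrow> ('a \<Rightarrow> 'a \<Rightarrow> bool) \<Rightarrow> ('a \<Rightarrow> ftype) \<Rightarrow>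
   'b set \<Rightarrow> ('b \<Rightarrow> 'b \<Rightarrow> bool) \<Rightarrow> ('b \<Rightarrow> ftype) \<Rightarrow> 'a \<Rightarrow> 'b \<Rightarrow> bool" where
  "simulates W le lab W' le' lab' x y \<longleftrightarrow>
     (\<exists>E. simulation W le lab W' le' lab' E \<and> E x y)"

definition dynamic_rel ::
  "'a set \<Rightarrow> ('a \<Rightarrow> 'a \<Rightarrow> bool) \<Rightarrow> ('b \<Rightarrow> 'b \<Rightarrow> bool) \<Rightarrow> ('a \<Rightarrow> 'b \<Rightarrow> bool) \<Rightarrow> bool" where
  "dynamic_rel W S S' E \<longleftrightarrow>
     (\<forall>x y y'. E x y \<and> S' y y' \<longrightarrow> (\<exists>x'\<in>W. S x x' \<and> E x' y'))"

definition surjective_rel :: "'a set \<Rightarrow> 'b set \<Rightarrow> ('a \<Rightarrow> 'b \<Rightarrow> bool) \<Rightarrow> bool" where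
  "surjective_rel W W' E \<longleftrightarrow> (\<forall>y\<in>W'. \<exists>x\<in>W. E x y)"

text \<open>Sim is defined by backwards induction on the strict order; we compute it with
  a fuel parameter, and the value with fuel card W is the intended one (every point of a
  finite partial order has height below card W).\<close>

fun sim_fuel :: "nat \<Rightarrow> 'a set \<Rightarrow> ('a \<Rightarrow> 'a \<Rightarrow> bool) \<Rightarrow> ('a \<Rightarrow> ftype) \<Rightarrow> 'a \<Rightarrow> fm" where
  "sim_fuel 0 W le lab w = Bot"
| "sim_fuel (Suc n) W le lab w =
     Imp (BigAnd (tpos (lab w)))
         (Or (BigOr (tneg (lab w)))
             (BigOr ((\<lambda>v. sim_fuel n W le lab v) ` {v\<in>W. le w v \<and> v \<noteq> w})))"

definition Sim :: "'a set \<Rightarrow> ('a \<Rightarrow> 'a \<Rightarrow> bool) \<Rightarrow> ('a \<Rightarrow> ftype) \<Rightarrow> 'a \<Rightarrow> fm" where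
  "Sim W le lab w = sim_fuel (card W) W le lab w"

end

theory Submission
  imports Defs
begin


lemma imp_id: "\<turnstile> Imp a a"
proof -
  have "\<turnstile> Imp (Imp a (Imp (Imp a a) a)) (Imp (Imp a (Imp a a)) (Imp a a))" by (rule ax_S)
  then have "\<turnstile> Imp (Imp a (Imp a a)) (Imp a a)" using ax_K mp by blast
  then show ?thesis using ax_K mp by blast
qed

lemma imp_K: "\<turnstile> b \<Longrightarrow> \<turnstile> Imp a b" using ax_K mp by blast

lemma hs: "\<turnstile> Imp a b \<Longrightarrow> \<turnstile> Imp b c \<Longrightarrow> \<turnstile> Imp a c"
proof -
  assume 1: "\<turnstile> Imp a b" and 2: "\<turnstile> Imp b c"
  have "\<turnstile> Imp a (Imp b c)" using imp_K[OF 2] .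
  then have "\<turnstile> Imp (Imp a b) (Imp a c)" using ax_S mp by blast
  then show ?thesis using 1 mp by blast
qed

lemma or_elim: "\<turnstile> Imp a c \<Longrightarrow> \<turnstile> Imp b c \<Longrightarrow> \<turnstile> Imp (Or a b) c"
  using ax_D3 mp by blast

lemma next_mono: "\<turnstile> Imp a b \<Longrightarrow> \<turnstile> Imp (Next a) (Next b)"
  using nec ax_NImp mp by blast

lemma dia_unfold: "\<turnstile> Imp (Dia p) (Or p (Next (Dia p)))"
proof -
  let ?c = "Or p (Next (Dia p))"
  have pd: "\<turnstile> Imp p (Dia p)" using hs[OF ax_D1 ax_Dia] .
  have nd: "\<turnstile> Imp (Next (Dia p)) (Dia p)" using hs[OF ax_D2 ax_Dia] .
  have "\<turnstile> Imp (Or (Next p) (Next (Next (Dia p)))) (Next (Dia p))"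
    using or_elim[OF next_mono[OF pd] next_mono[OF nd]] .
  then have "\<turnstile> Imp (Next ?c) (Next (Dia p))" using hs[OF ax_NOr] by blast
  then have "\<turnstile> Imp (Next ?c) ?c" using hs ax_D2 by blast
  then have 1: "\<turnstile> Imp (Dia ?c) ?c" by (rule dia_ind)
  have "\<turnstile> Imp (Dia p) (Dia ?c)" using dia_mono[OF ax_D1] .
  then show ?thesis using hs 1 by blast
qed

definition isth :: "fm set \<Rightarrow> bool" where
  "isth T \<longleftrightarrow> (\<forall>\<phi>. (\<turnstile> \<phi>) \<longrightarrow> \<phi> \<in> T) \<and> (\<forall>\<phi> \<psi>. Imp \<phi> \<psi> \<in> T \<longrightarrow> \<phi> \<in> T \<longrightarrow> \<psi> \<in> T)"

definition prime_th :: "fm set \<Rightarrow> bool" where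
  "prime_th T \<longleftrightarrow> isth T \<and> Bot \<notin> T \<and> (\<forall>\<phi> \<psi>. Or \<phi> \<psi> \<in> T \<longrightarrow> \<phi> \<in> T \<or> \<psi> \<in> T)"

lemma th_thm: "isth T \<Longrightarrow> \<turnstile> \<phi> \<Longrightarrow> \<phi> \<in> T" unfolding isth_def by blast
lemma th_mp: "isth T \<Longrightarrow> Imp \<phi> \<psi> \<in> T \<Longrightarrow> \<phi> \<in> T \<Longrightarrow> \<psi> \<in> T" unfolding isth_def by blast
lemma th_imp: "isth T \<Longrightarrow> \<turnstile> Imp \<phi> \<psi> \<Longrightarrow> \<phi> \<in> T \<Longrightarrow> \<psi> \<in> T" using th_thm th_mp by blast

lemma th_and: "isth T \<Longrightarrow> And a b \<in> T \<longleftrightarrow> a \<in> T \<and> b \<in> T"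
  using th_imp[OF _ ax_C1] th_imp[OF _ ax_C2] th_mp th_imp[OF _ ax_C3] by blast

lemma prime_or: "prime_th T \<Longrightarrow> Or a b \<in> T \<longleftrightarrow> a \<in> T \<or> b \<in> T"
  unfolding prime_th_def using th_imp[OF _ ax_D1] th_imp[OF _ ax_D2] by blast

lemma th_ded: assumes "isth T" shows "isth {\<chi>. Imp a \<chi> \<in> T}"
  unfolding isth_def
proof (intro conjI allI impI)
  fix \<phi> assume "\<turnstile> \<phi>" then show "\<phi> \<in> {\<chi>. Imp a \<chi> \<in> T}" using imp_K th_thm assms by blast
next
  fix \<phi> \<psi> assume 1: "Imp \<phi> \<psi> \<in> {\<chi>. Imp a \<chi> \<in> T}" and 2: "\<phi> \<in> {\<chi>. Imp a \<chi> \<in> T}"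
  have "Imp (Imp a \<phi>) (Imp a \<psi>) \<in> T" using th_mp[OF assms th_thm[OF assms ax_S]] 1 by blast
  then show "\<psi> \<in> {\<chi>. Imp a \<chi> \<in> T}" using th_mp[OF assms] 2 by blast
qed

lemma th_ded_sub: "isth T \<Longrightarrow> T \<subseteq> {\<chi>. Imp a \<chi> \<in> T}"
  using th_imp ax_K by blast

lemma th_ded_in: "isth T \<Longrightarrow> a \<in> {\<chi>. Imp a \<chi> \<in> T}"
  using th_thm imp_id by blast

lemma lindenbaum:
  assumes T: "isth T" and psi: "\<psi> \<notin> T"
  shows "\<exists>M. prime_th M \<and> T \<subseteq> M \<and> \<psi> \<notin> M"
proof -
  let ?A = "{X. isth X \<and> T \<subseteq> X \<and> \<psi> \<notin> X}"
  have "\<forall>C\<in>chains ?A. \<exists>U\<in>?A. \<forall>X\<in>C. X \<subseteq> U"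
  proof
    fix C assume C: "C \<in> chains ?A"
    show "\<exists>U\<in>?A. \<forall>X\<in>C. X \<subseteq> U"
    proof (cases "C = {}")
      case True then show ?thesis using T psi by blast
    next
      case False
      have ch: "\<forall>X\<in>C. \<forall>Y\<in>C. X \<subseteq> Y \<or> Y \<subseteq> X" and sub: "C \<subseteq> ?A"
        using C unfolding chains_def chain_subset_def by blast+
      have "isth (\<Union>C)" unfolding isth_def
      proof (intro conjI allI impI)
        fix \<phi> assume "\<turnstile> \<phi>" then show "\<phi> \<in> \<Union>C" using False sub th_thm by blast
      next
        fix \<phi> \<chi> assume 1: "Imp \<phi> \<chi> \<in> \<Union>C" and 2: "\<phi> \<in> \<Union>C"
        then obtain X Y where "X \<in> C" "Y \<in> C" "Imp \<phi> \<chi> \<in> X" "\<phi> \<in> Y" by blast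
        then show "\<chi> \<in> \<Union>C" using ch sub th_mp
          by (metis (no_types, lifting) UnionI mem_Collect_eq subsetD)
      qed
      then have "\<Union>C \<in> ?A" using False sub by blast
      then show ?thesis by blast
    qed
  qed
  then obtain M where M: "M \<in> ?A" and max: "\<forall>X\<in>?A. M \<subseteq> X \<longrightarrow> X = M"
    using Zorn_Lemma2[of ?A] by blast
  have thM: "isth M" and TM: "T \<subseteq> M" and pM: "\<psi> \<notin> M" using M by auto
  have key: "a \<notin> M \<Longrightarrow> Imp a \<psi> \<in> M" for a
  proof (rule ccontr)
    assume a: "a \<notin> M" and n: "Imp a \<psi> \<notin> M"
    let ?X = "{\<chi>. Imp a \<chi> \<in> M}"
    have "?X \<in> ?A" using th_ded[OF thM] th_ded_sub[OF thM] TM n by blast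
    then have "?X = M" using max th_ded_sub[OF thM] by blast
    then show False using th_ded_in[OF thM] a by blast
  qed
  have "Bot \<notin> M" using pM th_imp[OF thM ax_EFQ] by blast
  moreover have "\<forall>a b. Or a b \<in> M \<longrightarrow> a \<in> M \<or> b \<in> M"
  proof (intro allI impI, rule ccontr)
    fix a b assume o: "Or a b \<in> M" and "\<not> (a \<in> M \<or> b \<in> M)"
    then have "Imp a \<psi> \<in> M" "Imp b \<psi> \<in> M" using key by auto
    then have "\<psi> \<in> M" using th_mp[OF thM] th_thm[OF thM ax_D3] o by metis
    then show False using pM by blast
  qed
  ultimately show ?thesis using thM TM pM unfolding prime_th_def by blast
qed

lemma prime_ext:
  assumes "isth T" "Imp a b \<notin> T"
  shows "\<exists>M. prime_th M \<and> T \<subseteq> M \<and> a \<in> M \<and> b \<notin> M"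
proof -
  have "b \<notin> {\<chi>. Imp a \<chi> \<in> T}" using assms by simp
  then obtain M where "prime_th M" "{\<chi>. Imp a \<chi> \<in> T} \<subseteq> M" "b \<notin> M"
    using lindenbaum[OF th_ded[OF assms(1)]] by blast
  then show ?thesis using th_ded_sub[OF assms(1)] th_ded_in[OF assms(1)] by blast
qed

lemma list_of_set: "finite A \<Longrightarrow> set (list_of A) = A"
  unfolding list_of_def using someI_ex[OF finite_distinct_list] by blast

lemma conj_list_th: "isth T \<Longrightarrow> conj_list xs \<in> T \<longleftrightarrow> (\<forall>x\<in>set xs. x \<in> T)"
proof (induction xs rule: conj_list.induct)
  case 1 then show ?case using th_thm[OF _ ax_EFQ[of Bot]] by (simp add: Top_def)
next
  case (2 \<phi>) then show ?case by simp
next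
  case (3 \<phi> v va) then show ?case using th_and by auto
qed

lemma disj_list_th: "prime_th T \<Longrightarrow> disj_list xs \<in> T \<longleftrightarrow> (\<exists>x\<in>set xs. x \<in> T)"
proof (induction xs rule: disj_list.induct)
  case 1 then show ?case unfolding prime_th_def by auto
next
  case (2 \<phi>) then show ?case by simp
next
  case (3 \<phi> v va) then show ?case using prime_or by auto
qed

lemma BigAnd_th: "isth T \<Longrightarrow> finite A \<Longrightarrow> BigAnd A \<in> T \<longleftrightarrow> A \<subseteq> T"
  unfolding BigAnd_def using conj_list_th list_of_set by blast

lemma BigOr_th: "prime_th T \<Longrightarrow> finite A \<Longrightarrow> BigOr A \<in> T \<longleftrightarrow> (\<exists>x\<in>A. x \<in> T)"
  unfolding BigOr_def using disj_list_th list_of_set by blast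



definition Wc :: "ftype set" where "Wc = {D. prime_th (snd D) \<and> fst D = - snd D}"
definition lec :: "ftype \<Rightarrow> ftype \<Rightarrow> bool" where "lec D D' \<longleftrightarrow> snd D \<subseteq> snd D'"
definition nxt :: "ftype \<Rightarrow> ftype" where
  "nxt D = (- {\<phi>. Next \<phi> \<in> snd D}, {\<phi>. Next \<phi> \<in> snd D})"
definition Sc :: "ftype \<Rightarrow> ftype \<Rightarrow> bool" where "Sc D D' \<longleftrightarrow> D \<in> Wc \<and> D' = nxt D"

lemma nxt_prime: assumes "prime_th T" shows "prime_th {\<phi>. Next \<phi> \<in> T}"
proof -
  have th: "isth T" using assms prime_th_def by blast
  have "isth {\<phi>. Next \<phi> \<in> T}" unfolding isth_def
    using th_thm[OF th nec] th_mp[OF th th_mp[OF th th_thm[OF th ax_NImp]]] by blast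
  moreover have "Bot \<notin> {\<phi>. Next \<phi> \<in> T}"
    using th_imp[OF th ax_NBot[unfolded Neg_def]] assms prime_th_def by blast
  moreover have "\<forall>a b. Or a b \<in> {\<phi>. Next \<phi> \<in> T} \<longrightarrow> a \<in> {\<phi>. Next \<phi> \<in> T} \<or> b \<in> {\<phi>. Next \<phi> \<in> T}"
    using th_imp[OF th ax_NOr] prime_or[OF assms] by blast
  ultimately show ?thesis unfolding prime_th_def by blast
qed

lemma nxt_Wc: "D \<in> Wc \<Longrightarrow> nxt D \<in> Wc"
  unfolding Wc_def nxt_def using nxt_prime by auto

lemma Wc_type: assumes "D \<in> Wc" shows "is_type UNIV D"
proof -
  have p: "prime_th (snd D)" and f: "fst D = - snd D" using assms Wc_def by auto
  have th: "isth (snd D)" using p prime_th_def by blast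
  show ?thesis unfolding is_type_def f
    using th_and[OF th] prime_or[OF p] th_mp[OF th] p[unfolded prime_th_def]
      th_imp[OF th hs[OF ax_D1 ax_Dia]] by auto
qed

lemma canon_wqm: "weak_quasimodel UNIV Wc lec id Sc"
proof -
  have po: "partial_order_on' Wc lec" unfolding partial_order_on'_def lec_def Wc_def
    by (auto simp: prod_eq_iff)
  have lf: "labelled_frame UNIV Wc lec id" unfolding labelled_frame_def
  proof (intro conjI po ballI allI impI)
    fix w assume "w \<in> Wc" then show "is_type UNIV (id w)" using Wc_type by simp
  next
    fix w v assume "lec w v" then show "tpos (id w) \<subseteq> tpos (id v)" by (simp add: lec_def)
  next
    fix w \<phi> \<psi> assume w: "w \<in> Wc" and i: "Imp \<phi> \<psi> \<in> tneg (id w)"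
    have p: "prime_th (snd w)" and f: "fst w = - snd w" using w Wc_def by auto
    have "Imp \<phi> \<psi> \<notin> snd w" using i f by auto
    then obtain M where M: "prime_th M" "snd w \<subseteq> M" "\<phi> \<in> M" "\<psi> \<notin> M"
      using prime_ext p prime_th_def by blast
    show "\<exists>v\<in>Wc. lec w v \<and> \<phi> \<in> tpos (id v) \<and> \<psi> \<in> tneg (id v)"
      by (rule bexI[of _ "(- M, M)"]) (use M in \<open>auto simp: Wc_def lec_def\<close>)
  qed
  have fc: "forward_confluent Wc lec Sc" unfolding forward_confluent_def Sc_def lec_def
    using nxt_Wc by (fastforce simp: nxt_def)
  have st: "\<forall>w\<in>Wc. \<forall>v\<in>Wc. Sc w v \<longrightarrow> S_T (id w) (id v)"
  proof (intro ballI impI)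
    fix w v assume w: "w \<in> Wc" and "v \<in> Wc" and s: "Sc w v"
    have p: "prime_th (snd w)" and f: "fst w = - snd w" using w Wc_def by auto
    have th: "isth (snd w)" using p prime_th_def by blast
    have v: "v = nxt w" using s Sc_def by blast
    have d1: "Dia \<phi> \<in> snd w \<Longrightarrow> \<phi> \<notin> snd w \<Longrightarrow> Next (Dia \<phi>) \<in> snd w" for \<phi>
      using th_imp[OF th dia_unfold] prime_or[OF p] by blast
    have d2: "Next (Dia \<phi>) \<in> snd w \<Longrightarrow> Dia \<phi> \<in> snd w" for \<phi>
      using th_imp[OF th hs[OF ax_D2 ax_Dia]] by blast
    show "S_T (id w) (id v)" unfolding S_T_def v nxt_def using d1 d2 f by auto
  qed
  show ?thesis unfolding weak_quasimodel_def using lf fc st nxt_Wc by (auto simp: Sc_def)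
qed

lemma canon_det: "deterministic Wc Sc"
  unfolding deterministic_def Sc_def by auto



lemma type_fin: "is_type \<Sigma> \<Phi> \<Longrightarrow> finite \<Sigma> \<Longrightarrow> finite (tpos \<Phi>) \<and> finite (tneg \<Phi>)"
proof -
  assume a: "is_type \<Sigma> \<Phi>" "finite \<Sigma>"
  have "tpos \<Phi> \<subseteq> \<Sigma>" "tneg \<Phi> \<subseteq> \<Sigma>" using a(1) unfolding is_type_def by blast+
  then show ?thesis using a(2) finite_subset by blast
qed

lemma sim_props: "simulation W le lab W' le' lab' E \<Longrightarrow> E x y \<Longrightarrow> x \<in> W \<and> y \<in> W' \<and> sub_T (lab x) (lab' y)"
  unfolding simulation_def by metis

lemma sim_fwd: "simulation W le lab W' le' lab' E \<Longrightarrow> E x y \<Longrightarrow> x' \<in> W \<Longrightarrow> le x x' \<Longrightarrow> \<exists>y'\<in>W'. le' y y' \<and> E x' y'"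
  unfolding simulation_def by metis

lemma wqm_type: "weak_quasimodel \<Sigma> W le lab S \<Longrightarrow> w \<in> W \<Longrightarrow> is_type \<Sigma> (lab w)"
  unfolding weak_quasimodel_def labelled_frame_def by metis

lemma wqm_po: "weak_quasimodel \<Sigma> W le lab S \<Longrightarrow> partial_order_on' W le"
  unfolding weak_quasimodel_def labelled_frame_def by metis

lemma simB:
  assumes wqm: "weak_quasimodel \<Sigma> W le lab S" and fS: "finite \<Sigma>" and fW: "finite W"
    and sim: "simulation W le lab Wc lec id E"
  shows "E u D \<Longrightarrow> sim_fuel n W le lab u \<notin> snd D"
proof (induction n arbitrary: u D)
  case 0
  then have "D \<in> Wc" using sim_props[OF sim] by blast
  then show ?case by (auto simp: Wc_def prime_th_def)
next
  case (Suc n)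
  have uW: "u \<in> W" and DW: "D \<in> Wc" and sub: "sub_T (lab u) D"
    using sim_props[OF sim Suc.prems] by auto
  have p: "prime_th (snd D)" and f: "fst D = - snd D" using DW Wc_def by auto
  have th: "isth (snd D)" using p prime_th_def by blast
  have ty: "is_type \<Sigma> (lab u)" using wqm_type[OF wqm uW] .
  have fin: "finite (tpos (lab u))" "finite (tneg (lab u))" using type_fin[OF ty fS] by auto
  let ?U = "{v\<in>W. le u v \<and> v \<noteq> u}"
  have finU: "finite ((\<lambda>v. sim_fuel n W le lab v) ` ?U)" using fW by simp
  show ?case
  proof
    assume "sim_fuel (Suc n) W le lab u \<in> snd D"
    then have i: "Imp (BigAnd (tpos (lab u))) (Or (BigOr (tneg (lab u)))
             (BigOr ((\<lambda>v. sim_fuel n W le lab v) ` ?U))) \<in> snd D" by simp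
    have "BigAnd (tpos (lab u)) \<in> snd D" using BigAnd_th[OF th fin(1)] sub sub_T_def by auto
    then have "Or (BigOr (tneg (lab u))) (BigOr ((\<lambda>v. sim_fuel n W le lab v) ` ?U)) \<in> snd D"
      using th_mp[OF th i] by blast
    then have "BigOr (tneg (lab u)) \<in> snd D \<or> BigOr ((\<lambda>v. sim_fuel n W le lab v) ` ?U) \<in> snd D"
      using prime_or[OF p] by blast
    then show False
    proof
      assume "BigOr (tneg (lab u)) \<in> snd D"
      then obtain x where "x \<in> tneg (lab u)" "x \<in> snd D" using BigOr_th[OF p fin(2)] by blast
      then show False using sub f unfolding sub_T_def by auto
    next
      assume "BigOr ((\<lambda>v. sim_fuel n W le lab v) ` ?U) \<in> snd D"
      then obtain v where v: "v \<in> W" "le u v" "sim_fuel n W le lab v \<in> snd D"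
        using BigOr_th[OF p finU] by blast
      then obtain D' where "D' \<in> Wc" "lec D D'" "E v D'" using sim_fwd[OF sim Suc.prems] by blast
      then show False using Suc.IH v(3) lec_def by blast
    qed
  qed
qed

lemma unfoldA:
  assumes wqm: "weak_quasimodel \<Sigma> W le lab S" and fS: "finite \<Sigma>" and fW: "finite W"
    and D: "D \<in> Wc" and uW: "u \<in> W" and ns: "sim_fuel (Suc m) W le lab u \<notin> snd D"
  shows "\<exists>D'\<in>Wc. lec D D' \<and> sub_T (lab u) D' \<and>
            (\<forall>u'\<in>W. le u u' \<and> u' \<noteq> u \<longrightarrow> sim_fuel m W le lab u' \<notin> snd D')"
proof -
  have p: "prime_th (snd D)" using D Wc_def by auto
  have th: "isth (snd D)" using p prime_th_def by blast
  have ty: "is_type \<Sigma> (lab u)" using wqm_type[OF wqm uW] .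
  have fin: "finite (tpos (lab u))" "finite (tneg (lab u))" using type_fin[OF ty fS] by auto
  let ?U = "{v\<in>W. le u v \<and> v \<noteq> u}"
  have finU: "finite ((\<lambda>v. sim_fuel m W le lab v) ` ?U)" using fW by simp
  have "Imp (BigAnd (tpos (lab u))) (Or (BigOr (tneg (lab u)))
             (BigOr ((\<lambda>v. sim_fuel m W le lab v) ` ?U))) \<notin> snd D" using ns by simp
  then obtain M where M: "prime_th M" "snd D \<subseteq> M" "BigAnd (tpos (lab u)) \<in> M"
     "Or (BigOr (tneg (lab u))) (BigOr ((\<lambda>v. sim_fuel m W le lab v) ` ?U)) \<notin> M"
    using prime_ext[OF th] by blast
  have thM: "isth M" using M(1) prime_th_def by blast
  have pos: "tpos (lab u) \<subseteq> M" using BigAnd_th[OF thM fin(1)] M(3) by blast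
  have o: "BigOr (tneg (lab u)) \<notin> M" "BigOr ((\<lambda>v. sim_fuel m W le lab v) ` ?U) \<notin> M"
    using M(4) prime_or[OF M(1)] by auto
  have neg: "tneg (lab u) \<subseteq> - M" using o(1) BigOr_th[OF M(1) fin(2)] by blast
  have rest: "\<forall>u'\<in>W. le u u' \<and> u' \<noteq> u \<longrightarrow> sim_fuel m W le lab u' \<notin> M"
    using o(2) BigOr_th[OF M(1) finU] by blast
  show ?thesis
    by (rule bexI[of _ "(-M, M)"]) (use M pos neg rest in \<open>auto simp: Wc_def lec_def sub_T_def\<close>)
qed

definition EA :: "'a set \<Rightarrow> ('a \<Rightarrow> 'a \<Rightarrow> bool) \<Rightarrow> ('a \<Rightarrow> ftype) \<Rightarrow> 'a \<Rightarrow> ftype \<Rightarrow> bool" where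
  "EA W le lab u D \<longleftrightarrow> u \<in> W \<and> D \<in> Wc \<and> sub_T (lab u) D \<and>
     (\<exists>n. card {x\<in>W. le u x \<and> x \<noteq> u} \<le> n \<and>
        (\<forall>u'\<in>W. le u u' \<and> u' \<noteq> u \<longrightarrow> sim_fuel n W le lab u' \<notin> snd D))"

lemma EA_sim:
  assumes wqm: "weak_quasimodel \<Sigma> W le lab S" and fS: "finite \<Sigma>" and fW: "finite W"
  shows "simulation W le lab Wc lec id (EA W le lab)"
proof -
  have 1: "\<forall>x y. EA W le lab x y \<longrightarrow> x \<in> W \<and> y \<in> Wc" by (simp add: EA_def)
  have 2: "\<forall>x y. EA W le lab x y \<longrightarrow> sub_T (lab x) (id y)" by (simp add: EA_def)
  have 3: "\<exists>y'\<in>Wc. lec y y' \<and> EA W le lab x' y'" if a: "EA W le lab x y \<and> x' \<in> W \<and> le x x'"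
   for x y x'
  proof -
  have po: "partial_order_on' W le" using wqm_po[OF wqm] .
  from a obtain n where xW: "x \<in> W" and yW: "y \<in> Wc" and n: "card {z\<in>W. le x z \<and> z \<noteq> x} \<le> n"
    and r: "\<forall>u'\<in>W. le x u' \<and> u' \<noteq> x \<longrightarrow> sim_fuel n W le lab u' \<notin> snd y"
    unfolding EA_def by blast
  show "\<exists>y'\<in>Wc. lec y y' \<and> EA W le lab x' y'"
  proof (cases "x' = x")
    case True then show ?thesis using a yW by (auto simp: lec_def)
  next
    case False
    have x'W: "x' \<in> W" and le1: "le x x'" using a by auto
    let ?A = "{z\<in>W. le x z \<and> z \<noteq> x}" and ?B = "{z\<in>W. le x' z \<and> z \<noteq> x'}"
    have sub: "?B \<subseteq> ?A - {x'}"
    proof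
      fix z assume z: "z \<in> ?B"
      then have "le x z" using po le1 xW x'W unfolding partial_order_on'_def by blast
      moreover have "z \<noteq> x" using z po le1 xW x'W False unfolding partial_order_on'_def by blast
      ultimately show "z \<in> ?A - {x'}" using z by auto
    qed
    have "x' \<in> ?A" using x'W le1 False by auto
    have fA: "finite ?A" using fW by simp
    have "card ?B \<le> card (?A - {x'})" using sub fA by (intro card_mono) auto
    also have "\<dots> < card ?A" by (rule card_Diff1_less[OF fA \<open>x' \<in> ?A\<close>])
    finally have "card ?B < card ?A" .
    then obtain m where nm: "n = Suc m" and cm: "card ?B \<le> m" using n by (cases n) auto
    have "sim_fuel (Suc m) W le lab x' \<notin> snd y" using r x'W le1 False nm by blast
    then obtain D' where D': "D' \<in> Wc" "lec y D'" "sub_T (lab x') D'"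
       "\<forall>u'\<in>W. le x' u' \<and> u' \<noteq> x' \<longrightarrow> sim_fuel m W le lab u' \<notin> snd D'"
      using unfoldA[OF wqm fS fW yW x'W] by blast
    show ?thesis using D' cm x'W unfolding EA_def by blast
  qed
  qed
  show ?thesis unfolding simulation_def using 1 2 3 by blast
qed


theorem lemma7p2:
  fixes \<Sigma> :: "fm set"
    and W :: "'a set" and le :: "'a \<Rightarrow> 'a \<Rightarrow> bool"
    and lab :: "'a \<Rightarrow> ftype" and S :: "'a \<Rightarrow> 'a \<Rightarrow> bool"
  assumes "finite \<Sigma>" and "closed_sub \<Sigma>"
    and "finite W"
    and "weak_quasimodel \<Sigma> W le lab S"
    and "\<And>(W' :: ftype set) le' lab' S'.
           weak_quasimodel UNIV W' le' lab' S' \<Longrightarrow> deterministic W' S' \<Longrightarrow>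
           simulation W le lab W' le' lab' (simulates W le lab W' le' lab') \<and>
           dynamic_rel W S S' (simulates W le lab W' le' lab') \<and>
           surjective_rel W W' (simulates W le lab W' le' lab')"
    and "P = {w\<in>W. \<not> (\<turnstile> Sim W le lab w)}"
    and "R = (\<lambda>w. {v\<in>P. (\<lambda>x y. x \<in> P \<and> y \<in> P \<and> S x y)\<^sup>*\<^sup>* w v})"
    and "w \<in> P"
  shows "\<turnstile> Imp (Next (BigAnd (Sim W le lab ` R w))) (BigAnd (Sim W le lab ` R w))"
proof (rule ccontr)
  note fS = assms(1) and fW = assms(3) and wqm = assms(4) and hyp = assms(5)
    and Pdef = assms(6) and Rdef = assms(7) and wP = assms(8)
  let ?A = "Sim W le lab ` R w"
  let ?F = "BigAnd ?A"
  assume np: "\<not> (\<turnstile> Imp (Next ?F) ?F)"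
  have RP: "R w \<subseteq> P" using Rdef by auto
  have PW: "P \<subseteq> W" using Pdef by auto
  have "finite (R w)" using finite_subset[OF _ fW] RP PW by blast
  then have finA: "finite ?A" by (rule finite_imageI)
  have thT: "isth {\<chi>. \<turnstile> \<chi>}" unfolding isth_def using mp by blast
  have "?F \<notin> {\<chi>. Imp (Next ?F) \<chi> \<in> {\<chi>. \<turnstile> \<chi>}}" using np by simp
  then obtain G where G: "prime_th G" "{\<chi>. Imp (Next ?F) \<chi> \<in> {\<chi>. \<turnstile> \<chi>}} \<subseteq> G" "?F \<notin> G"
    using lindenbaum[OF th_ded[OF thT]] by blast
  have thG: "isth G" using G(1) prime_th_def by blast
  have nF: "Next ?F \<in> G" using G(2) th_ded_in[OF thT] by blast
  obtain v where vR: "v \<in> R w" and vG: "Sim W le lab v \<notin> G"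
    using G(3) BigAnd_th[OF thG finA] by blast
  have vW: "v \<in> W" using vR RP PW by blast
  then obtain m where cW: "card W = Suc m" using fW by (cases "card W") auto
  have GW: "(-G, G) \<in> Wc" using G(1) by (simp add: Wc_def)
  have "sim_fuel (Suc m) W le lab v \<notin> snd (-G, G)" using vG cW by (simp add: Sim_def)
  then obtain D where D: "D \<in> Wc" "lec (-G, G) D" "sub_T (lab v) D"
     "\<forall>u'\<in>W. le v u' \<and> u' \<noteq> v \<longrightarrow> sim_fuel m W le lab u' \<notin> snd D"
    using unfoldA[OF wqm fS fW GW vW] by blast
  have "card {x\<in>W. le v x \<and> x \<noteq> v} \<le> card (W - {v})" using fW by (intro card_mono) auto
  also have "\<dots> = m" using cW vW fW by simp
  finally have cm: "card {x\<in>W. le v x \<and> x \<noteq> v} \<le> m" .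
  have "EA W le lab v D" unfolding EA_def using vW D(1) D(3) cm D(4) by blast
  then have simv: "simulates W le lab Wc lec id v D"
    unfolding simulates_def using EA_sim[OF wqm fS fW] by blast
  have H: "simulation W le lab Wc lec id (simulates W le lab Wc lec id)"
     "dynamic_rel W S Sc (simulates W le lab Wc lec id)"
    using hyp[OF canon_wqm canon_det] by simp_all
  have "Sc D (nxt D)" using D(1) Sc_def by blast
  then obtain v' where v': "v' \<in> W" "S v v'" "simulates W le lab Wc lec id v' (nxt D)"
    using H(2) simv unfolding dynamic_rel_def by blast
  have ns: "Sim W le lab v' \<notin> snd (nxt D)"
    unfolding Sim_def using simB[OF wqm fS fW H(1) v'(3)] by blast
  have pD: "prime_th (snd D)" using D(1) Wc_def by blast
  have thD: "isth (snd D)" using pD prime_th_def by blast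
  have v'P: "v' \<in> P"
  proof -
    have "\<not> (\<turnstile> Sim W le lab v')"
    proof
      assume "\<turnstile> Sim W le lab v'"
      then have "Next (Sim W le lab v') \<in> snd D" using th_thm[OF thD nec] by blast
      then show False using ns by (simp add: nxt_def)
    qed
    then show ?thesis using Pdef v'(1) by blast
  qed
  have "v' \<in> R w"
  proof -
    have vP: "v \<in> P" using vR RP by blast
    have "(\<lambda>x y. x \<in> P \<and> y \<in> P \<and> S x y)\<^sup>*\<^sup>* w v" using vR Rdef by simp
    then have "(\<lambda>x y. x \<in> P \<and> y \<in> P \<and> S x y)\<^sup>*\<^sup>* w v'"
      using vP v'P v'(2) by (simp add: rtranclp.rtrancl_into_rtrancl)
    then show ?thesis using Rdef v'P by simp
  qed
  have "Next ?F \<in> snd D" using nF D(2) by (auto simp: lec_def)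
  then have "?F \<in> snd (nxt D)" by (simp add: nxt_def)
  moreover have "prime_th (snd (nxt D))" using nxt_Wc[OF D(1)] by (simp add: Wc_def)
  then have "isth (snd (nxt D))" by (simp add: prime_th_def)
  ultimately have "?A \<subseteq> snd (nxt D)" using BigAnd_th[OF _ finA] by blast
  then show False using ns \<open>v' \<in> R w\<close> by blast
qed

end
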